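(* Let $n\in\mathbb N$, $\mathfrak g=\mathfrak{sl}_3(\mathbb C)$ and $$v'_{2,n}=\sum_{t=0}^{2n}\frac1{t!}\,(f_{\epsilon_1-\epsilon_2}^t)_L(e_{\epsilon_1-\epsilon_2}^n)\,e_{\epsilon_2-\epsilon_3}^{2n-t}\,e_{\epsilon_1-\epsilon_3}^t\in U(\mathfrak g).$$ Let $R$ be the $\mathfrak g$-submodule of $U(\mathfrak g)$ generated by $v'_{2,n}$ under the adjoint action, $R_0$ its zero-weight subspace and $\mathcal P_0=\{p_r:r\in R_0\}$. Then the polynomial $$p(h)=\prod_{j=0}^{n-1}(h_1-j)\cdot\prod_{j=0}^{n-1}(h_2-j)\cdot\prod_{j=-1}^{n-2}(h_1+h_2-j)$$ (i.e. $h_1(h_1-1)\cdots(h_1-n+1)\,h_2(h_2-1)\cdots(h_2-n+1)\,(h_1+h_2+1)(h_1+h_2)\cdots(h_1+h_2-n+2)$) belongs to $\mathcal P_0$.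
   Context: $\mathfrak g=\mathfrak{sl}_3(\mathbb C)$ with Cartan subalgebra $\mathfrak h$ of traceless diagonal matrices, $\mathfrak n_+$ strictly upper triangular matrices. Root vectors $e_{\epsilon_1-\epsilon_2}=E_{12}$, $e_{\epsilon_2-\epsilon_3}=E_{23}$, $e_{\epsilon_1-\epsilon_3}=-E_{13}$, $f_{\epsilon_1-\epsilon_2}=E_{21}$, $f_{\epsilon_2-\epsilon_3}=E_{32}$, $f_{\epsilon_1-\epsilon_3}=-E_{31}$; $h_1=E_{11}-E_{22}$, $h_2=E_{22}-E_{33}$. $X_L f=[X,f]$ is the adjoint action, extended to $U(\mathfrak g)$. For $r\in R_0$, $p_r$ is the unique element of $\mathbb C[h_1,h_2]=S(\mathfrak h)$ with $r-p_r\in U(\mathfrak g)\mathfrak n_+$ (equivalently $rv_\mu=p_r(\mu)v_\mu$ for every highest weight vector $v_\mu$ of weight $\mu$). *)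

theory Defs
  imports "HOL-Analysis.Analysis" "HOL-Library.Poly_Mapping"
begin

datatype gword = GW "nat list"

instantiation gword :: monoid_add
begin
definition zero_gword :: gword where "zero_gword = GW []"
fun plus_gword :: "gword \<Rightarrow> gword \<Rightarrow> gword" where
  "plus_gword (GW a) (GW b) = GW (a @ b)"
instance
proof
  fix a b c :: gword
  show "a + b + c = a + (b + c)" by (cases a; cases b; cases c) simp
  show "0 + a = a" by (cases a) (simp add: zero_gword_def)
  show "a + 0 = a" by (cases a) (simp add: zero_gword_def)
qed
end

text \<open>Free associative unital C-algebra on the generators (noncommutative polynomials).\<close>
type_synonym falg = "gword \<Rightarrow>\<^sub>0 complex"

definition sc :: "complex \<Rightarrow> falg" where
  "sc c = Poly_Mapping.single 0 c"

definition gen :: "nat \<Rightarrow> falg" where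
  "gen i = Poly_Mapping.single (GW [i]) 1"

text \<open>Basis of sl_3: gen 0 = e_{e1-e2} = E12, gen 1 = e_{e2-e3} = E23, gen 2 = e_{e1-e3} = -E13,
  gen 3 = f_{e1-e2} = E21, gen 4 = f_{e2-e3} = E32, gen 5 = f_{e1-e3} = -E31,
  gen 6 = h1 = E11-E22, gen 7 = h2 = E22-E33.\<close>
abbreviation "e12 \<equiv> gen 0"
abbreviation "e23 \<equiv> gen 1"
abbreviation "e13 \<equiv> gen 2"
abbreviation "f12 \<equiv> gen 3"
abbreviation "f23 \<equiv> gen 4"
abbreviation "f13 \<equiv> gen 5"
abbreviation "hh1 \<equiv> gen 6"
abbreviation "hh2 \<equiv> gen 7"

definition sl3 :: "(complex^3^3) set" where
  "sl3 = {X. trace X = 0}"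

definition iota :: "complex^3^3 \<Rightarrow> falg" where
  "iota X = sc (X$1$2) * e12 + sc (X$2$3) * e23 + sc (- X$1$3) * e13
          + sc (X$2$1) * f12 + sc (X$3$2) * f23 + sc (- X$3$1) * f13
          + sc (X$1$1) * hh1 + sc (- X$3$3) * hh2"

text \<open>The two-sided ideal I with U(sl_3) = free algebra / I.\<close>
inductive_set Uideal :: "falg set" where
  rel: "X \<in> sl3 \<Longrightarrow> Y \<in> sl3 \<Longrightarrow>
          iota X * iota Y - iota Y * iota X - iota (X ** Y - Y ** X) \<in> Uideal"
| zero: "0 \<in> Uideal"
| add: "a \<in> Uideal \<Longrightarrow> b \<in> Uideal \<Longrightarrow> a + b \<in> Uideal"
| lmult: "a \<in> Uideal \<Longrightarrow> c * a \<in> Uideal"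
| rmult: "a \<in> Uideal \<Longrightarrow> a * c \<in> Uideal"

definition Ueq :: "falg \<Rightarrow> falg \<Rightarrow> bool" where
  "Ueq a b \<longleftrightarrow> a - b \<in> Uideal"

definition ad :: "falg \<Rightarrow> falg \<Rightarrow> falg" where
  "ad x f = x * f - f * x"

definition vprime :: "nat \<Rightarrow> falg" where
  "vprime n = (\<Sum>t = 0..2*n. sc (1 / of_nat (fact t)) *
      ((ad f12 ^^ t) (e12 ^ n)) * e23 ^ (2*n - t) * e13 ^ t)"

text \<open>Preimage in the free algebra of the sl_3-submodule R of U(sl_3) (adjoint action)
  generated by v'_{2,n}.\<close>
inductive_set Rmod :: "falg \<Rightarrow> falg set" for v :: falg where
  gen: "v \<in> Rmod v"
| ideal: "a \<in> Uideal \<Longrightarrow> a \<in> Rmod v"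
| add: "a \<in> Rmod v \<Longrightarrow> b \<in> Rmod v \<Longrightarrow> a + b \<in> Rmod v"
| smult: "a \<in> Rmod v \<Longrightarrow> sc c * a \<in> Rmod v"
| adj: "X \<in> sl3 \<Longrightarrow> a \<in> Rmod v \<Longrightarrow> ad (iota X) a \<in> Rmod v"

definition zero_weight :: "falg \<Rightarrow> bool" where
  "zero_weight r \<longleftrightarrow> Ueq (ad hh1 r) 0 \<and> Ueq (ad hh2 r) 0"

text \<open>Membership in the left ideal U(g) n_+ of U(g) (n_+ spanned by E12, E23, E13).\<close>
definition in_Un_plus :: "falg \<Rightarrow> bool" where
  "in_Un_plus x \<longleftrightarrow> (\<exists>a b c. Ueq x (a * e12 + b * e23 + c * e13))"

definition ppoly :: "nat \<Rightarrow> falg" where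
  "ppoly n = prod_list (map (\<lambda>j. hh1 - of_nat j) [0..<n])
           * prod_list (map (\<lambda>j. hh2 - of_nat j) [0..<n])
           * prod_list (map (\<lambda>j. hh1 + hh2 - of_int j) [-1..int n - 2])"

end

theory Submission
  imports Defs
begin

lemma gword_add_eq_0: "(a::gword) + b = 0 \<longleftrightarrow> a = 0 \<and> b = 0"
  by (cases a; cases b) (auto simp: zero_gword_def)

definition eps :: "falg \<Rightarrow> complex" where "eps x = Poly_Mapping.lookup x 0"

lemma eps_mult: "eps (x * y) = eps x * eps y"
proof -
  have *: "(\<Sum>q. Poly_Mapping.lookup y q when 0 = l + q) = (Poly_Mapping.lookup y 0 when l = 0)" for l
  proof -
    have "(\<lambda>q. Poly_Mapping.lookup y q when 0 = l + q) = (\<lambda>q. (Poly_Mapping.lookup y q when l = 0) when q = 0)"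
      by (auto simp: fun_eq_iff when_def gword_add_eq_0[of l] eq_commute[of 0])
    then show ?thesis by (simp only:) (cases "l = 0"; simp)
  qed
  show ?thesis unfolding eps_def lookup_mult * by (simp add: mult_when)
qed

lemma eps_add: "eps (x + y) = eps x + eps y" by (simp add: eps_def lookup_add)
lemma eps_gen: "eps (gen i) = 0" by (simp add: eps_def gen_def lookup_single zero_gword_def)
lemma eps_sc: "eps (sc c) = c" by (simp add: eps_def sc_def)
lemma eps_minus: "eps (x - y) = eps x - eps y" by (simp add: eps_def lookup_minus)
lemma eps_one: "eps 1 = 1" by (simp add: eps_def)
lemma eps_zero: "eps 0 = 0" by (simp add: eps_def)

lemma eps_iota: "eps (iota X) = 0"
  by (simp add: iota_def eps_add eps_mult eps_gen)

lemma eps_Uideal: "a \<in> Uideal \<Longrightarrow> eps a = 0"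
  by (induction rule: Uideal.induct) (auto simp: eps_minus eps_mult eps_iota eps_add eps_zero)

lemma one_notin_Uideal: "(1::falg) \<notin> Uideal"
  using eps_Uideal eps_one by fastforce

lemma Uideal_uminus: "a \<in> Uideal \<Longrightarrow> - a \<in> Uideal"
  using Uideal.lmult[of a "-1"] by simp
lemma Uideal_diff: "a \<in> Uideal \<Longrightarrow> b \<in> Uideal \<Longrightarrow> a - b \<in> Uideal"
  using Uideal.add[of a "-b"] Uideal_uminus[of b] by simp

lemma Ueq_refl: "Ueq a a" by (simp add: Ueq_def Uideal.zero)
lemma Ueq_eqI: "a = b \<Longrightarrow> Ueq a b" by (simp add: Ueq_refl)

lemma equivp_Ueq: "equivp Ueq"
proof (rule equivpI)
  show "reflp Ueq" by (simp add: reflp_def Ueq_refl)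
  show "symp Ueq" unfolding symp_def Ueq_def using Uideal_uminus by fastforce
  show "transp Ueq" unfolding transp_def Ueq_def using Uideal.add by fastforce
qed

quotient_type U = falg / Ueq
  by (rule equivp_Ueq)

instantiation U :: ring_1
begin
lift_definition zero_U :: U is 0 .
lift_definition one_U :: U is 1 .
lift_definition plus_U :: "U \<Rightarrow> U \<Rightarrow> U" is "(+)"
proof -
  fix a b c d :: falg assume "Ueq a b" "Ueq c d"
  then have "(a - b) + (c - d) \<in> Uideal" unfolding Ueq_def by (rule Uideal.add)
  then show "Ueq (a + c) (b + d)" unfolding Ueq_def by (simp add: algebra_simps)
qed
lift_definition minus_U :: "U \<Rightarrow> U \<Rightarrow> U" is "(-)"
proof -
  fix a b c d :: falg assume "Ueq a b" "Ueq c d"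
  then have "(a - b) - (c - d) \<in> Uideal" unfolding Ueq_def by (rule Uideal_diff)
  then show "Ueq (a - c) (b - d)" unfolding Ueq_def by (simp add: algebra_simps)
qed
lift_definition uminus_U :: "U \<Rightarrow> U" is "uminus"
proof -
  fix a b :: falg assume "Ueq a b"
  then have "- (a - b) \<in> Uideal" unfolding Ueq_def by (rule Uideal_uminus)
  then show "Ueq (- a) (- b)" unfolding Ueq_def by (simp add: algebra_simps)
qed
lift_definition times_U :: "U \<Rightarrow> U \<Rightarrow> U" is "(*)"
proof -
  fix a b c d :: falg assume "Ueq a b" "Ueq c d"
  then have "(a - b) * c \<in> Uideal" "b * (c - d) \<in> Uideal"
    unfolding Ueq_def by (auto intro: Uideal.rmult Uideal.lmult)
  then have "(a - b) * c + b * (c - d) \<in> Uideal" by (rule Uideal.add)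
  then show "Ueq (a * c) (b * d)" unfolding Ueq_def by (simp add: algebra_simps)
qed
instance
proof
  fix a b c :: U
  show "a + b + c = a + (b + c)" by transfer (rule Ueq_eqI, simp add: algebra_simps)
  show "a + b = b + a" by transfer (rule Ueq_eqI, simp add: algebra_simps)
  show "0 + a = a" by transfer (rule Ueq_eqI, simp add: algebra_simps)
  show "- a + a = 0" by transfer (rule Ueq_eqI, simp add: algebra_simps)
  show "a - b = a + - b" by transfer (rule Ueq_eqI, simp add: algebra_simps)
  show "a * b * c = a * (b * c)" by transfer (rule Ueq_eqI, simp add: algebra_simps)
  show "(a + b) * c = a * c + b * c" by transfer (rule Ueq_eqI, simp add: algebra_simps)
  show "a * (b + c) = a * b + a * c" by transfer (rule Ueq_eqI, simp add: algebra_simps)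
  show "1 * a = a" by transfer (rule Ueq_eqI, simp add: algebra_simps)
  show "a * 1 = a" by transfer (rule Ueq_eqI, simp add: algebra_simps)
  show "(0::U) \<noteq> 1" by transfer (use one_notin_Uideal Uideal_uminus in \<open>fastforce simp: Ueq_def\<close>)
qed
end

definition cls :: "falg \<Rightarrow> U" where "cls = abs_U"

lemma cls_add: "cls (a + b) = cls a + cls b" unfolding cls_def by (simp add: plus_U.abs_eq)
lemma cls_mult: "cls (a * b) = cls a * cls b" unfolding cls_def by (simp add: times_U.abs_eq)
lemma cls_diff: "cls (a - b) = cls a - cls b" unfolding cls_def by (simp add: minus_U.abs_eq)
lemma cls_uminus: "cls (- a) = - cls a" unfolding cls_def by (simp add: uminus_U.abs_eq)
lemma cls_0: "cls 0 = 0" unfolding cls_def by (simp add: zero_U.abs_eq)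
lemma cls_1: "cls 1 = 1" unfolding cls_def by (simp add: one_U.abs_eq)
lemma cls_eq_iff: "cls a = cls b \<longleftrightarrow> Ueq a b" unfolding cls_def by (simp add: U.abs_eq_iff)
lemma cls_surj: "\<exists>a. x = cls a" unfolding cls_def by (metis Quotient_U Quotient_abs_rep)
lemmas cls_simps = cls_add cls_mult cls_diff cls_uminus cls_0 cls_1

lemma cls_pow: "cls (a ^ k) = cls a ^ k" by (induction k) (simp_all add: cls_simps)
lemma cls_of_nat: "cls (of_nat k) = of_nat k" by (induction k) (simp_all add: cls_simps)
lemma cls_of_int: "cls (of_int k) = of_int k"
  by (cases k rule: int_cases) (simp_all add: cls_simps cls_of_nat)
lemma cls_sum: "cls (sum f A) = (\<Sum>x\<in>A. cls (f x))"
  by (induction A rule: infinite_finite_induct) (simp_all add: cls_simps)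
lemma cls_prod_list: "cls (prod_list (map f xs)) = prod_list (map (\<lambda>x. cls (f x)) xs)"
  by (induction xs) (simp_all add: cls_simps)


definition Em :: "3 \<Rightarrow> 3 \<Rightarrow> complex^3^3" where
  "Em i j = (\<chi> a b. if a = i \<and> b = j then 1 else 0)"

lemma sc_0: "sc 0 = 0" by (simp add: sc_def)
lemma sc_1: "sc 1 = 1" by (simp add: sc_def)
lemma sc_m1: "sc (-1) = -1" by (simp add: sc_def single_uminus)
lemma sc_add: "sc (a + b) = sc a + sc b" by (simp add: sc_def single_add)
lemma sc_mult: "sc (a * b) = sc a * sc b" by (simp add: sc_def mult_single)
lemma sc_of_nat: "sc (of_nat k) = of_nat k" by (induction k) (simp_all add: sc_add sc_0 sc_1)

lemma three_neq: "(1::3) \<noteq> 2" "(1::3) \<noteq> 3" "(2::3) \<noteq> 3" "(2::3) \<noteq> 1" "(3::3) \<noteq> 1" "(3::3) \<noteq> 2"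
  by (simp_all add: exhaust_3)

lemma rel_gen:
  assumes "X \<in> sl3" "Y \<in> sl3" "iota X = a" "iota Y = b" "iota (X ** Y - Y ** X) = c"
  shows "cls a * cls b - cls b * cls a = cls c"
proof -
  have "Ueq (a * b - b * a) c" using Uideal.rel[OF assms(1,2)] assms(3-5) by (simp add: Ueq_def)
  then show ?thesis by (simp add: cls_eq_iff[symmetric] cls_simps)
qed

lemmas msimps = Em_def matrix_matrix_mult_def sum_3 three_neq iota_def sc_0 sc_1 sc_m1 sl3_def trace_def


lemma sc_uminus: "sc (- a) = - sc a" by (simp add: sc_def single_uminus)
lemma sc_numeral: "sc (numeral k) = numeral k"
  using sc_of_nat[of "numeral k"] by simp
lemma cls_numeral: "cls (numeral k) = numeral k"
  using cls_of_nat[of "numeral k"] by simp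

definition "E1 = cls e12"
definition "E2 = cls e23"
definition "E3 = cls e13"
definition "F1 = cls f12"
definition "F2 = cls f23"
definition "H1 = cls hh1"
definition "H2 = cls hh2"

lemmas msimps2 = msimps sc_uminus sc_numeral

lemma iota_F1: "iota (Em 2 1) = f12" by (simp add: msimps2)
lemma iota_F2: "iota (Em 3 2) = f23" by (simp add: msimps2)
lemma sl3_F1: "Em 2 1 \<in> sl3" by (simp add: msimps2)
lemma sl3_F2: "Em 3 2 \<in> sl3" by (simp add: msimps2)

lemma rel_gen2:
  assumes "X \<in> sl3" "Y \<in> sl3" "iota X = a" "iota Y = b" "cls (iota (X ** Y - Y ** X)) = d"
  shows "cls a * cls b = cls b * cls a + d"
  using rel_gen[OF assms(1-4) refl] assms(5) by (simp add: algebra_simps)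

lemma E1F1: "E1 * F1 = F1 * E1 + H1"
  unfolding E1_def F1_def H1_def
  by (rule rel_gen2[of "Em 1 2" "Em 2 1"]) (simp_all add: msimps2 cls_simps cls_numeral)

lemma H1F1: "H1 * F1 = F1 * H1 + (- 2 * F1)"
  unfolding H1_def F1_def
  by (rule rel_gen2[of "Em 1 1 - Em 2 2" "Em 2 1"]) (simp_all add: msimps2 cls_simps cls_numeral)

lemma H2F1: "H2 * F1 = F1 * H2 + F1"
  unfolding H2_def F1_def
  by (rule rel_gen2[of "Em 2 2 - Em 3 3" "Em 2 1"]) (simp_all add: msimps2 cls_simps cls_numeral)

lemma E2F2: "E2 * F2 = F2 * E2 + H2"
  unfolding E2_def F2_def H2_def
  by (rule rel_gen2[of "Em 2 3" "Em 3 2"]) (simp_all add: msimps2 cls_simps cls_numeral)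

lemma H2F2: "H2 * F2 = F2 * H2 + (- 2 * F2)"
  unfolding H2_def F2_def
  by (rule rel_gen2[of "Em 2 2 - Em 3 3" "Em 3 2"]) (simp_all add: msimps2 cls_simps cls_numeral)

lemma H1F2: "H1 * F2 = F2 * H1 + F2"
  unfolding H1_def F2_def
  by (rule rel_gen2[of "Em 1 1 - Em 2 2" "Em 3 2"]) (simp_all add: msimps2 cls_simps cls_numeral)

lemma E2F1: "E2 * F1 = F1 * E2 + 0"
  unfolding E2_def F1_def
  by (rule rel_gen2[of "Em 2 3" "Em 2 1"]) (simp_all add: msimps2 cls_simps cls_numeral)

lemma E1F2: "E1 * F2 = F2 * E1 + 0"
  unfolding E1_def F2_def
  by (rule rel_gen2[of "Em 1 2" "Em 3 2"]) (simp_all add: msimps2 cls_simps cls_numeral)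

lemma E3F2: "E3 * F2 = F2 * E3 + (- E1)"
  unfolding E3_def F2_def E1_def
  by (rule rel_gen2[of "- Em 1 3" "Em 3 2"]) (simp_all add: msimps2 cls_simps cls_numeral)

lemma E3F1: "E3 * F1 = F1 * E3 + E2"
  unfolding E3_def F1_def E2_def
  by (rule rel_gen2[of "- Em 1 3" "Em 2 1"]) (simp_all add: msimps2 cls_simps cls_numeral)

lemma H1H2: "H1 * H2 = H2 * H1 + 0"
  unfolding H1_def H2_def
  by (rule rel_gen2[of "Em 1 1 - Em 2 2" "Em 2 2 - Em 3 3"]) (simp_all add: msimps2 cls_simps cls_numeral)

lemma H1E1: "H1 * E1 = E1 * H1 + 2 * E1"
  unfolding H1_def E1_def
  by (rule rel_gen2[of "Em 1 1 - Em 2 2" "Em 1 2"]) (simp_all add: msimps2 cls_simps cls_numeral)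

lemma H2E1: "H2 * E1 = E1 * H2 + (- E1)"
  unfolding H2_def E1_def
  by (rule rel_gen2[of "Em 2 2 - Em 3 3" "Em 1 2"]) (simp_all add: msimps2 cls_simps cls_numeral)

lemma H1E2: "H1 * E2 = E2 * H1 + (- E2)"
  unfolding H1_def E2_def
  by (rule rel_gen2[of "Em 1 1 - Em 2 2" "Em 2 3"]) (simp_all add: msimps2 cls_simps cls_numeral)

lemma H2E2: "H2 * E2 = E2 * H2 + 2 * E2"
  unfolding H2_def E2_def
  by (rule rel_gen2[of "Em 2 2 - Em 3 3" "Em 2 3"]) (simp_all add: msimps2 cls_simps cls_numeral)

lemma H1E3: "H1 * E3 = E3 * H1 + E3"
  unfolding H1_def E3_def
  by (rule rel_gen2[of "Em 1 1 - Em 2 2" "- Em 1 3"]) (simp_all add: msimps2 cls_simps cls_numeral)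

lemma H2E3: "H2 * E3 = E3 * H2 + E3"
  unfolding H2_def E3_def
  by (rule rel_gen2[of "Em 2 2 - Em 3 3" "- Em 1 3"]) (simp_all add: msimps2 cls_simps cls_numeral)


definition C :: "complex \<Rightarrow> U" where "C c = cls (sc c)"

lemma sc_comm_gen: "sc c * gen i = gen i * sc c"
  by (simp add: sc_def gen_def mult_single)
lemma sc_comm_sc: "sc c * sc d = sc d * sc c"
  by (simp add: sc_def mult_single mult.commute)

lemma C_comm_H1: "C c * H1 = H1 * C c" by (simp add: C_def H1_def cls_mult[symmetric] sc_comm_gen)
lemma C_comm_H2: "C c * H2 = H2 * C c" by (simp add: C_def H2_def cls_mult[symmetric] sc_comm_gen)
lemma C_comm_E1: "C c * E1 = E1 * C c" by (simp add: C_def E1_def cls_mult[symmetric] sc_comm_gen)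
lemma C_comm_E2: "C c * E2 = E2 * C c" by (simp add: C_def E2_def cls_mult[symmetric] sc_comm_gen)
lemma C_comm_E3: "C c * E3 = E3 * C c" by (simp add: C_def E3_def cls_mult[symmetric] sc_comm_gen)
lemma C_comm_C: "C c * C d = C d * C c" by (simp add: C_def cls_mult[symmetric] sc_comm_sc)
lemma C_mult: "C (c * d) = C c * C d" by (simp add: C_def sc_mult cls_mult)
lemma C_add: "C (c + d) = C c + C d" by (simp add: C_def sc_add cls_add)
lemma C_0: "C 0 = 0" by (simp add: C_def sc_0 cls_0)
lemma C_1: "C 1 = 1" by (simp add: C_def sc_1 cls_1)
lemma C_uminus: "C (- c) = - C c" by (simp add: C_def sc_uminus cls_uminus)
lemma C_of_nat: "C (of_nat k) = of_nat k" by (simp add: C_def sc_of_nat cls_of_nat)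

inductive_set Hs :: "U set" where
  h1: "H1 \<in> Hs" | h2: "H2 \<in> Hs" | const: "C c \<in> Hs"
| add: "x \<in> Hs \<Longrightarrow> y \<in> Hs \<Longrightarrow> x + y \<in> Hs"
| mult: "x \<in> Hs \<Longrightarrow> y \<in> Hs \<Longrightarrow> x * y \<in> Hs"

lemma H1H2': "H1 * H2 = H2 * H1" using H1H2 by simp

lemma Hs_comm_gen:
  assumes "y \<in> Hs" shows "H1 * y = y * H1" "H2 * y = y * H2" "C c * y = y * C c"
  using assms
proof (induction rule: Hs.induct)
  case (add x y)
  case 1 show ?case using add by (simp add: algebra_simps)
  case 2 show ?case using add by (simp add: algebra_simps)
  case 3 show ?case using add by (simp add: algebra_simps)
next
  case (mult x y)
  case 1 show ?case using mult by (metis mult.assoc)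
  case 2 show ?case using mult by (metis mult.assoc)
  case 3 show ?case using mult by (metis mult.assoc)
qed (simp_all add: H1H2' C_comm_H1 C_comm_H2 C_comm_C)

lemma Hs_comm: assumes "x \<in> Hs" "y \<in> Hs" shows "x * y = y * x"
  using assms(1)
proof (induction rule: Hs.induct)
  case (add x1 x2) then show ?case by (simp add: algebra_simps)
next
  case (mult x1 x2) then show ?case by (metis mult.assoc)
qed (use Hs_comm_gen[OF assms(2)] in auto)

lemma Hs_0: "0 \<in> Hs" using Hs.const[of 0] by (simp add: C_0)
lemma Hs_1: "1 \<in> Hs" using Hs.const[of 1] by (simp add: C_1)
lemma Hs_uminus: "x \<in> Hs \<Longrightarrow> - x \<in> Hs" using Hs.mult[OF Hs.const[of "-1"], of x] by (simp add: C_uminus C_1)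
lemma Hs_diff: "x \<in> Hs \<Longrightarrow> y \<in> Hs \<Longrightarrow> x - y \<in> Hs" using Hs.add[of x "- y"] Hs_uminus by simp

typedef hp = Hs morphisms ev Abs_hp
  using Hs.h1 by blast

setup_lifting type_definition_hp

instantiation hp :: comm_ring_1
begin
lift_definition zero_hp :: hp is 0 by (rule Hs_0)
lift_definition one_hp :: hp is 1 by (rule Hs_1)
lift_definition plus_hp :: "hp \<Rightarrow> hp \<Rightarrow> hp" is "(+)" by (rule Hs.add)
lift_definition times_hp :: "hp \<Rightarrow> hp \<Rightarrow> hp" is "(*)" by (rule Hs.mult)
lift_definition minus_hp :: "hp \<Rightarrow> hp \<Rightarrow> hp" is "(-)" by (rule Hs_diff)
lift_definition uminus_hp :: "hp \<Rightarrow> hp" is "uminus" by (rule Hs_uminus)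
instance
  by standard (transfer; simp add: algebra_simps Hs_comm)+
end

lemma ev_add: "ev (x + y) = ev x + ev y" by transfer simp
lemma ev_mult: "ev (x * y) = ev x * ev y" by transfer simp
lemma ev_diff: "ev (x - y) = ev x - ev y" by transfer simp
lemma ev_uminus: "ev (- x) = - ev x" by transfer simp
lemma ev_0: "ev 0 = 0" by transfer simp
lemma ev_1: "ev 1 = 1" by transfer simp
lemma ev_of_nat: "ev (of_nat k) = of_nat k" by (induction k) (simp_all add: ev_add ev_1 ev_0)
lemma ev_of_int: "ev (of_int k) = of_int k"
  by (cases k rule: int_cases) (simp_all add: ev_of_nat ev_uminus ev_add ev_1 ev_diff)
lemma ev_numeral: "ev (numeral k) = numeral k" using ev_of_nat[of "numeral k"] by simp
lemma ev_pow: "ev (x ^ k) = ev x ^ k" by (induction k) (simp_all add: ev_mult ev_1)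
lemma ev_sum: "ev (sum f A) = (\<Sum>x\<in>A. ev (f x))"
  by (induction A rule: infinite_finite_induct) (simp_all add: ev_add ev_0)
lemma ev_prod_list: "ev (prod_list (map f xs)) = prod_list (map (\<lambda>x. ev (f x)) xs)"
  by (induction xs) (simp_all add: ev_mult ev_1)
lemmas ev_simps = ev_add ev_mult ev_diff ev_uminus ev_0 ev_1 ev_of_nat ev_of_int ev_numeral ev_pow ev_sum

lift_definition hA :: hp is H1 by (rule Hs.h1)
lift_definition hB :: hp is H2 by (rule Hs.h2)
lift_definition hc :: "complex \<Rightarrow> hp" is C by (rule Hs.const)
lemma ev_hA: "ev hA = H1" by (rule hA.rep_eq)
lemma ev_hB: "ev hB = H2" by (rule hB.rep_eq)
lemma ev_hc: "ev (hc c) = C c" by (rule hc.rep_eq)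
lemma hc_mult: "hc (a * b) = hc a * hc b" by transfer (simp add: C_mult)
lemma hc_of_nat: "hc (of_nat k) = of_nat k" by (simp add: ev_inject[symmetric] ev_hc ev_of_nat C_of_nat)
lemma hc_1: "hc 1 = 1" by transfer (simp add: C_1)


definition Nset :: "U set" where "Nset = {x. \<exists>a b c. x = a * E1 + b * E2 + c * E3}"

lemma N_0: "0 \<in> Nset" unfolding Nset_def by (rule CollectI, rule exI[of _ 0], rule exI[of _ 0], rule exI[of _ 0]) simp
lemma N_add: "x \<in> Nset \<Longrightarrow> y \<in> Nset \<Longrightarrow> x + y \<in> Nset"
  unfolding Nset_def
proof clarify
  fix a b c a' b' c' show "\<exists>p q r. a * E1 + b * E2 + c * E3 + (a' * E1 + b' * E2 + c' * E3) = p * E1 + q * E2 + r * E3"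
    by (rule exI[of _ "a + a'"], rule exI[of _ "b + b'"], rule exI[of _ "c + c'"]) (simp add: algebra_simps)
qed
lemma N_lmult: "x \<in> Nset \<Longrightarrow> y * x \<in> Nset"
  unfolding Nset_def
proof clarify
  fix a b c show "\<exists>p q r. y * (a * E1 + b * E2 + c * E3) = p * E1 + q * E2 + r * E3"
    by (rule exI[of _ "y * a"], rule exI[of _ "y * b"], rule exI[of _ "y * c"]) (simp add: algebra_simps)
qed
lemma N_uminus: "x \<in> Nset \<Longrightarrow> - x \<in> Nset" using N_lmult[of x "-1"] by simp
lemma N_diff: "x \<in> Nset \<Longrightarrow> y \<in> Nset \<Longrightarrow> x - y \<in> Nset" using N_add[of x "- y"] N_uminus by simp
lemma N_E1: "a * E1 \<in> Nset" unfolding Nset_def by (rule CollectI, rule exI[of _ a], rule exI[of _ 0], rule exI[of _ 0]) simp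
lemma N_E2: "a * E2 \<in> Nset" unfolding Nset_def by (rule CollectI, rule exI[of _ 0], rule exI[of _ a], rule exI[of _ 0]) simp
lemma N_E3: "a * E3 \<in> Nset" unfolding Nset_def by (rule CollectI, rule exI[of _ 0], rule exI[of _ 0], rule exI[of _ a]) simp

lemma N_rmult_gen:
  assumes "x \<in> Nset" "E1 * h = p1 * E1" "E2 * h = p2 * E2" "E3 * h = p3 * E3"
  shows "x * h \<in> Nset"
  using assms(1) unfolding Nset_def
proof clarify
  fix a b c show "\<exists>p q r. (a * E1 + b * E2 + c * E3) * h = p * E1 + q * E2 + r * E3"
    by (rule exI[of _ "a * p1"], rule exI[of _ "b * p2"], rule exI[of _ "c * p3"])
       (simp add: algebra_simps assms(2-4))
qed

lemma E1H1: "E1 * H1 = (H1 - 2) * E1" using H1E1 by (simp add: algebra_simps)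
lemma E2H1: "E2 * H1 = (H1 + 1) * E2" using H1E2 by (simp add: algebra_simps)
lemma E3H1: "E3 * H1 = (H1 - 1) * E3" using H1E3 by (simp add: algebra_simps)
lemma E1H2: "E1 * H2 = (H2 + 1) * E1" using H2E1 by (simp add: algebra_simps)
lemma E2H2: "E2 * H2 = (H2 - 2) * E2" using H2E2 by (simp add: algebra_simps)
lemma E3H2: "E3 * H2 = (H2 - 1) * E3" using H2E3 by (simp add: algebra_simps)

lemma N_Hs: "y \<in> Hs \<Longrightarrow> x \<in> Nset \<Longrightarrow> x * y \<in> Nset"
proof (induction y arbitrary: x rule: Hs.induct)
  case h1 then show ?case by (rule N_rmult_gen[OF _ E1H1 E2H1 E3H1])
next
  case h2 then show ?case by (rule N_rmult_gen[OF _ E1H2 E2H2 E3H2])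
next
  case (const c) then show ?case by (rule N_rmult_gen[OF _ C_comm_E1[symmetric] C_comm_E2[symmetric] C_comm_E3[symmetric]])
next
  case (add y z) then show ?case by (simp add: distrib_left N_add)
next
  case (mult y z) then show ?case by (simp add: mult.assoc[symmetric])
qed

lemma N_ev: "x \<in> Nset \<Longrightarrow> x * ev s \<in> Nset" using N_Hs ev by blast

definition mo :: "U \<Rightarrow> U \<Rightarrow> bool" where "mo x y \<longleftrightarrow> x - y \<in> Nset"

lemma mo_refl: "mo x x" by (simp add: mo_def N_0)
lemma mo_eq: "x = y \<Longrightarrow> mo x y" by (simp add: mo_refl)
lemma mo_sym: "mo x y \<Longrightarrow> mo y x" unfolding mo_def using N_uminus by fastforce
lemma mo_trans: "mo x y \<Longrightarrow> mo y z \<Longrightarrow> mo x z" unfolding mo_def using N_add by fastforce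
lemma mo_add: "mo a b \<Longrightarrow> mo c d \<Longrightarrow> mo (a + c) (b + d)"
proof -
  assume "mo a b" "mo c d"
  then have "(a - b) + (c - d) \<in> Nset" unfolding mo_def by (rule N_add)
  then show ?thesis unfolding mo_def by (simp add: algebra_simps)
qed
lemma mo_diff: "mo a b \<Longrightarrow> mo c d \<Longrightarrow> mo (a - c) (b - d)"
proof -
  assume "mo a b" "mo c d"
  then have "(a - b) - (c - d) \<in> Nset" unfolding mo_def by (rule N_diff)
  then show ?thesis unfolding mo_def by (simp add: algebra_simps)
qed
lemma mo_lmult: "mo x y \<Longrightarrow> mo (z * x) (z * y)"
proof -
  assume "mo x y"
  then have "z * (x - y) \<in> Nset" unfolding mo_def by (rule N_lmult)
  then show ?thesis unfolding mo_def by (simp add: algebra_simps)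
qed
lemma mo_ev: "mo x y \<Longrightarrow> mo (x * ev s) (y * ev s)"
proof -
  assume "mo x y"
  then have "(x - y) * ev s \<in> Nset" unfolding mo_def by (rule N_ev)
  then show ?thesis unfolding mo_def by (simp add: algebra_simps)
qed
lemma mo_N: "x \<in> Nset \<Longrightarrow> mo x 0" by (simp add: mo_def)
lemma mo_sum: "(\<And>i. i \<in> A \<Longrightarrow> mo (f i) (g i)) \<Longrightarrow> mo (sum f A) (sum g A)"
  by (induction A rule: infinite_finite_induct) (auto intro: mo_add simp: mo_refl)

lemma mo_E1: "mo (a * E1) 0" by (rule mo_N, rule N_E1)
lemma mo_E2: "mo (a * E2) 0" by (rule mo_N, rule N_E2)
lemma mo_E3: "mo (a * E3) 0" by (rule mo_N, rule N_E3)


lemmas [trans] = mo_trans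

lemma of_nat_left_comm: "(of_nat k :: 'a::ring_1) * (x * y) = x * (of_nat k * y)"
proof -
  have "(of_nat k :: 'a) * (x * y) = (of_nat k * x) * y" by (simp only: mult.assoc)
  also have "\<dots> = (x * of_nat k) * y" by (simp only: mult_of_nat_commute)
  finally show ?thesis by (simp only: mult.assoc)
qed

lemma pow_comm: "(a::'a::monoid_mult) * b = b * a \<Longrightarrow> a * b ^ m = b ^ m * a"
proof (induction m)
  case (Suc m)
  have "a * b ^ Suc m = (a * b) * b ^ m" by (simp only: power_Suc mult.assoc)
  also have "\<dots> = (b * a) * b ^ m" by (subst Suc.prems) (rule refl)
  also have "\<dots> = b * (a * b ^ m)" by (simp only: mult.assoc)
  also have "\<dots> = b * (b ^ m * a)" by (subst Suc.IH[OF Suc.prems]) (rule refl)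
  also have "\<dots> = b ^ Suc m * a" by (simp only: mult.assoc power_Suc)
  finally show ?case .
qed simp

lemma HF_gen:
  assumes "ev h * F = F * ev h + of_int k * F"
  shows "ev h * F ^ m = F ^ m * ev (h + of_int k * of_nat m)"
proof (induction m)
  case 0 then show ?case by (simp add: ev_simps)
next
  case (Suc m)
  have "ev h * F ^ Suc m = (ev h * F) * F ^ m" by (simp add: mult.assoc)
  also have "\<dots> = F * (ev h * F ^ m) + of_int k * F * F ^ m" using assms by (simp add: algebra_simps)
  also have "\<dots> = F * F ^ m * ev (h + of_int k * of_nat m) + F * F ^ m * of_int k"
    using Suc by (simp add: mult.assoc mult_of_int_commute)
  also have "\<dots> = F ^ Suc m * ev (h + of_int k * of_nat (Suc m))"
    by (simp add: ev_simps algebra_simps)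
  finally show ?case .
qed

lemma sl2_gen:
  assumes EF: "E * F = F * E + ev h" and hF: "ev h * F = F * ev h + of_int (-2) * F"
  shows "E * F ^ Suc m = F ^ Suc m * E + F ^ m * ev (of_nat (Suc m) * (h - of_nat m))"
proof (induction m)
  case 0 then show ?case using EF by (simp add: ev_simps)
next
  case (Suc m)
  have hp: "ev h * F ^ Suc m = F ^ Suc m * ev (h + of_int (-2) * of_nat (Suc m))"
    by (rule HF_gen[OF hF])
  have "E * F ^ Suc (Suc m) = (E * F) * F ^ Suc m" by (simp add: mult.assoc)
  also have "\<dots> = F * (E * F ^ Suc m) + ev h * F ^ Suc m" using EF by (simp add: algebra_simps)
  also have "\<dots> = F * F ^ Suc m * E + F * F ^ m * ev (of_nat (Suc m) * (h - of_nat m))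
       + F ^ Suc m * ev (h + of_int (-2) * of_nat (Suc m))"
    using Suc hp by (simp add: algebra_simps)
  also have "\<dots> = F ^ Suc (Suc m) * E + F ^ Suc m * (ev (of_nat (Suc m) * (h - of_nat m))
       + ev (h + of_int (-2) * of_nat (Suc m)))"
    by (simp add: algebra_simps)
  also have "ev (of_nat (Suc m) * (h - of_nat m)) + ev (h + of_int (-2) * of_nat (Suc m))
      = ev (of_nat (Suc (Suc m)) * (h - of_nat (Suc m)))"
    unfolding ev_add[symmetric] by (rule arg_cong[where f = ev]) (simp add: algebra_simps)
  finally show ?case .
qed

lemma H1_ev: "H1 = ev hA" by (simp add: ev_hA)
lemma H2_ev: "H2 = ev hB" by (simp add: ev_hB)

lemma HF11: "ev hA * F1 = F1 * ev hA + of_int (-2) * F1" using H1F1 by (simp add: ev_hA)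
lemma HF21: "ev hB * F1 = F1 * ev hB + of_int 1 * F1" using H2F1 by (simp add: ev_hB)
lemma HF22: "ev hB * F2 = F2 * ev hB + of_int (-2) * F2" using H2F2 by (simp add: ev_hB)

lemma E1F1pow: "E1 * F1 ^ Suc m = F1 ^ Suc m * E1 + F1 ^ m * ev (of_nat (Suc m) * (hA - of_nat m))"
  by (rule sl2_gen[OF _ HF11]) (use E1F1 in \<open>simp add: ev_hA\<close>)
lemma E2F2pow: "E2 * F2 ^ Suc m = F2 ^ Suc m * E2 + F2 ^ m * ev (of_nat (Suc m) * (hB - of_nat m))"
  by (rule sl2_gen[OF _ HF22]) (use E2F2 in \<open>simp add: ev_hB\<close>)

lemma H2F1pow: "H2 * F1 ^ m = F1 ^ m * ev (hB + of_nat m)"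
  using HF_gen[OF HF21, of m] by (simp add: ev_hB)

lemma E2F1pow: "E2 * F1 ^ m = F1 ^ m * E2" by (rule pow_comm) (use E2F1 in simp)
lemma E1F2pow: "E1 * F2 ^ m = F2 ^ m * E1" by (rule pow_comm) (use E1F2 in simp)

lemma E3F1pow: "\<exists>x. E3 * F1 ^ m = F1 ^ m * E3 + x * E2"
proof (induction m)
  case 0 show ?case by (rule exI[of _ 0]) simp
next
  case (Suc m)
  then obtain x where x: "E3 * F1 ^ m = F1 ^ m * E3 + x * E2" by blast
  have "E3 * F1 ^ Suc m = (E3 * F1) * F1 ^ m" by (simp add: mult.assoc)
  also have "\<dots> = F1 * (E3 * F1 ^ m) + E2 * F1 ^ m" using E3F1 by (simp add: algebra_simps)
  also have "\<dots> = F1 ^ Suc m * E3 + (F1 * x + F1 ^ m) * E2" using x E2F1pow by (simp add: algebra_simps)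
  finally show ?case by blast
qed

lemma E3F2pow: "E3 * F2 ^ Suc k = F2 ^ Suc k * E3 - of_nat (Suc k) * F2 ^ k * E1"
proof (induction k)
  case 0 then show ?case using E3F2 by simp
next
  case (Suc k)
  have "E3 * F2 ^ Suc (Suc k) = (E3 * F2) * F2 ^ Suc k" by (simp add: mult.assoc)
  also have "\<dots> = (F2 * E3 - E1) * F2 ^ Suc k" using E3F2 by simp
  also have "\<dots> = F2 * (E3 * F2 ^ Suc k) - E1 * F2 ^ Suc k" by (simp add: algebra_simps)
  also have "\<dots> = F2 * (F2 ^ Suc k * E3 - of_nat (Suc k) * F2 ^ k * E1) - F2 ^ Suc k * E1"
    by (simp only: Suc.IH E1F2pow)
  also have "\<dots> = F2 * F2 ^ Suc k * E3 - (of_nat (Suc k) * (F2 * F2 ^ k) * E1 + F2 * F2 ^ k * E1)"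
    by (simp add: algebra_simps of_nat_left_comm)
  also have "\<dots> = F2 ^ Suc (Suc k) * E3 - of_nat (Suc (Suc k)) * F2 ^ Suc k * E1"
    by (simp add: algebra_simps mult_of_nat_commute)
  finally show ?case .
qed

lemma N_E3F1: "E3 * F1 ^ j \<in> Nset"
proof -
  obtain x where "E3 * F1 ^ j = F1 ^ j * E3 + x * E2" using E3F1pow by blast
  then show ?thesis by (simp add: N_add N_E2 N_E3)
qed

lemma N_E2F1: "E2 * F1 ^ j \<in> Nset" using E2F1pow N_E2 by simp


definition f1 :: "nat \<Rightarrow> hp" where "f1 m = of_nat m * (hA - of_nat m + 1)"
definition Q1 :: "nat \<Rightarrow> nat \<Rightarrow> hp" where "Q1 s m = (\<Prod>i<s. f1 (m - i))"
definition g2 :: "nat \<Rightarrow> nat \<Rightarrow> hp" where "g2 l j = of_nat j * (hB + of_nat l - of_nat j + 1)"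
definition Q2 :: "nat \<Rightarrow> nat \<Rightarrow> nat \<Rightarrow> hp" where "Q2 s k l = (\<Prod>i<s. g2 l (k - i))"
definition q3 :: "nat \<Rightarrow> nat \<Rightarrow> hp" where "q3 k j = - (of_nat k * f1 j)"
definition Q3 :: "nat \<Rightarrow> nat \<Rightarrow> nat \<Rightarrow> hp" where "Q3 t k j = (\<Prod>i<t. q3 (k - i) (j - i))"

lemma nat_diff_Suc_aux: "(m::nat) - Suc i = m - 1 - i" by arith

lemma Q1_Suc: "Q1 (Suc s) m = f1 m * Q1 s (m - 1)"
  unfolding Q1_def by (simp only: prod.lessThan_Suc_shift diff_zero diff_Suc_eq_diff_pred)
lemma Q2_Suc: "Q2 (Suc s) k l = g2 l k * Q2 s (k - 1) l"
  unfolding Q2_def by (simp only: prod.lessThan_Suc_shift diff_zero diff_Suc_eq_diff_pred)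
lemma Q3_Suc: "Q3 (Suc t) k j = q3 k j * Q3 t (k - 1) (j - 1)"
  unfolding Q3_def by (simp only: prod.lessThan_Suc_shift diff_zero diff_Suc_eq_diff_pred)

lemma ev_comm: "ev a * ev b = ev b * ev a" by (simp add: ev_mult[symmetric] mult.commute)

lemma V1: "mo (E1 * F1 ^ m) (F1 ^ (m - 1) * ev (f1 m))"
proof (cases m)
  case 0 then show ?thesis using mo_E1[of 1] by (simp add: f1_def ev_simps)
next
  case (Suc m')
  have "f1 m = of_nat (Suc m') * (hA - of_nat m')" unfolding f1_def Suc by (simp add: algebra_simps)
  then have "E1 * F1 ^ m = F1 ^ Suc m' * E1 + F1 ^ (m - 1) * ev (f1 m)"
    using E1F1pow[of m'] Suc by simp
  moreover have "mo (F1 ^ Suc m' * E1 + F1 ^ (m - 1) * ev (f1 m)) (0 + F1 ^ (m - 1) * ev (f1 m))"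
    by (rule mo_add[OF mo_E1 mo_refl])
  ultimately show ?thesis by simp
qed

lemma E1pow: "mo (E1 ^ s * F1 ^ m) (F1 ^ (m - s) * ev (Q1 s m))"
proof (induction s arbitrary: m)
  case 0 then show ?case by (simp add: Q1_def ev_simps mo_refl)
next
  case (Suc s)
  have "E1 ^ Suc s * F1 ^ m = E1 ^ s * (E1 * F1 ^ m)" by (simp only: power_Suc2 mult.assoc)
  also have "mo \<dots> (E1 ^ s * (F1 ^ (m - 1) * ev (f1 m)))" by (rule mo_lmult[OF V1])
  also have "E1 ^ s * (F1 ^ (m - 1) * ev (f1 m)) = (E1 ^ s * F1 ^ (m - 1)) * ev (f1 m)" by (simp add: mult.assoc)
  also have "mo \<dots> (F1 ^ (m - 1 - s) * ev (Q1 s (m - 1)) * ev (f1 m))" by (rule mo_ev[OF Suc.IH])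
  also have "F1 ^ (m - 1 - s) * ev (Q1 s (m - 1)) * ev (f1 m) = F1 ^ (m - Suc s) * ev (Q1 (Suc s) m)"
    by (simp add: Q1_Suc ev_mult mult.assoc ev_comm)
  finally show ?case .
qed

lemma H2_shift: "ev (of_nat a * (hB - of_nat b)) * F1 ^ l = F1 ^ l * ev (of_nat a * (hB + of_nat l - of_nat b))"
proof -
  have "ev (of_nat a * (hB - of_nat b)) * F1 ^ l = of_nat a * (H2 * F1 ^ l) - of_nat (a * b) * F1 ^ l"
    by (simp add: ev_simps ev_hB right_diff_distrib left_diff_distrib mult.assoc)
  also have "\<dots> = of_nat a * (F1 ^ l * ev (hB + of_nat l)) - of_nat (a * b) * F1 ^ l"
    by (simp only: H2F1pow)
  also have "\<dots> = F1 ^ l * (of_nat a * ev (hB + of_nat l)) - F1 ^ l * of_nat (a * b)"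
    by (simp only: of_nat_left_comm mult_of_nat_commute[of "a * b"])
  also have "\<dots> = F1 ^ l * ev (of_nat a * (hB + of_nat l - of_nat b))"
    by (simp add: ev_simps right_diff_distrib)
  finally show ?thesis .
qed

lemma V2: "mo (E2 * F2 ^ k * F1 ^ l) (F2 ^ (k - 1) * F1 ^ l * ev (g2 l k))"
proof (cases k)
  case 0 then show ?thesis using mo_N[OF N_E2F1[of l]] by (simp add: g2_def ev_simps)
next
  case (Suc k')
  have g: "g2 l k = of_nat (Suc k') * (hB + of_nat l - of_nat k')" unfolding g2_def Suc by (simp add: algebra_simps)
  have "E2 * F2 ^ k * F1 ^ l = (E2 * F2 ^ Suc k') * F1 ^ l" by (simp only: Suc)
  also have "\<dots> = (F2 ^ Suc k' * E2 + F2 ^ k' * ev (of_nat (Suc k') * (hB - of_nat k'))) * F1 ^ l"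
    by (simp only: E2F2pow)
  also have "\<dots> = F2 ^ Suc k' * (E2 * F1 ^ l) + F2 ^ k' * (ev (of_nat (Suc k') * (hB - of_nat k')) * F1 ^ l)"
    by (simp only: distrib_right mult.assoc)
  also have "\<dots> = F2 ^ Suc k' * (E2 * F1 ^ l) + F2 ^ k' * (F1 ^ l * ev (of_nat (Suc k') * (hB + of_nat l - of_nat k')))"
    by (simp only: H2_shift)
  also have "\<dots> = F2 ^ Suc k' * (E2 * F1 ^ l) + F2 ^ (k - 1) * F1 ^ l * ev (g2 l k)"
    by (simp only: g[unfolded Suc] Suc diff_Suc_1 mult.assoc)
  also have "mo \<dots> (0 + F2 ^ (k - 1) * F1 ^ l * ev (g2 l k))"
    by (rule mo_add[OF mo_N[OF N_lmult[OF N_E2F1]] mo_refl])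
  finally show ?thesis by simp
qed

lemma E2pow: "mo (E2 ^ s * F2 ^ k * F1 ^ l) (F2 ^ (k - s) * F1 ^ l * ev (Q2 s k l))"
proof (induction s arbitrary: k)
  case 0 then show ?case by (simp add: Q2_def ev_simps mo_refl)
next
  case (Suc s)
  have "E2 ^ Suc s * F2 ^ k * F1 ^ l = E2 ^ s * (E2 * F2 ^ k * F1 ^ l)" by (simp only: power_Suc2 mult.assoc)
  also have "mo \<dots> (E2 ^ s * (F2 ^ (k - 1) * F1 ^ l * ev (g2 l k)))" by (rule mo_lmult[OF V2])
  also have "E2 ^ s * (F2 ^ (k - 1) * F1 ^ l * ev (g2 l k)) = (E2 ^ s * F2 ^ (k - 1) * F1 ^ l) * ev (g2 l k)"
    by (simp add: mult.assoc)
  also have "mo \<dots> (F2 ^ (k - 1 - s) * F1 ^ l * ev (Q2 s (k - 1) l) * ev (g2 l k))" by (rule mo_ev[OF Suc.IH])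
  also have "F2 ^ (k - 1 - s) * F1 ^ l * ev (Q2 s (k - 1) l) * ev (g2 l k) = F2 ^ (k - Suc s) * F1 ^ l * ev (Q2 (Suc s) k l)"
    by (simp add: Q2_Suc ev_mult mult.assoc ev_comm)
  finally show ?case .
qed

lemma V3: "mo (E3 * F2 ^ k * F1 ^ j) (F2 ^ (k - 1) * F1 ^ (j - 1) * ev (q3 k j))"
proof (cases k)
  case 0 then show ?thesis using mo_N[OF N_E3F1[of j]] by (simp add: q3_def ev_simps)
next
  case (Suc k')
  have "E3 * F2 ^ k * F1 ^ j = (E3 * F2 ^ Suc k') * F1 ^ j" by (simp only: Suc)
  also have "\<dots> = (F2 ^ Suc k' * E3 - of_nat (Suc k') * F2 ^ k' * E1) * F1 ^ j" by (simp only: E3F2pow)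
  also have "\<dots> = F2 ^ Suc k' * (E3 * F1 ^ j) - of_nat (Suc k') * F2 ^ k' * (E1 * F1 ^ j)"
    by (simp only: left_diff_distrib mult.assoc)
  also have "mo \<dots> (0 - of_nat (Suc k') * F2 ^ k' * (F1 ^ (j - 1) * ev (f1 j)))"
    by (rule mo_diff[OF mo_N[OF N_lmult[OF N_E3F1]] mo_lmult[OF V1]])
  also have "0 - of_nat (Suc k') * F2 ^ k' * (F1 ^ (j - 1) * ev (f1 j)) = F2 ^ (k - 1) * F1 ^ (j - 1) * ev (q3 k j)"
  proof -
    have "ev (q3 k j) = - (of_nat (Suc k') * ev (f1 j))" by (simp add: q3_def Suc ev_simps)
    moreover have "of_nat (Suc k') * F2 ^ k' * (F1 ^ (j - 1) * ev (f1 j)) = F2 ^ k' * F1 ^ (j - 1) * (of_nat (Suc k') * ev (f1 j))"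
      by (simp only: mult.assoc of_nat_left_comm)
    ultimately show ?thesis by (simp add: Suc)
  qed
  finally show ?thesis .
qed

lemma E3pow: "mo (E3 ^ t * F2 ^ k * F1 ^ j) (F2 ^ (k - t) * F1 ^ (j - t) * ev (Q3 t k j))"
proof (induction t arbitrary: k j)
  case 0 then show ?case by (simp add: Q3_def ev_simps mo_refl)
next
  case (Suc t)
  have "E3 ^ Suc t * F2 ^ k * F1 ^ j = E3 ^ t * (E3 * F2 ^ k * F1 ^ j)" by (simp only: power_Suc2 mult.assoc)
  also have "mo \<dots> (E3 ^ t * (F2 ^ (k - 1) * F1 ^ (j - 1) * ev (q3 k j)))" by (rule mo_lmult[OF V3])
  also have "E3 ^ t * (F2 ^ (k - 1) * F1 ^ (j - 1) * ev (q3 k j)) = (E3 ^ t * F2 ^ (k - 1) * F1 ^ (j - 1)) * ev (q3 k j)"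
    by (simp add: mult.assoc)
  also have "mo \<dots> (F2 ^ (k - 1 - t) * F1 ^ (j - 1 - t) * ev (Q3 t (k - 1) (j - 1)) * ev (q3 k j))" by (rule mo_ev[OF Suc.IH])
  also have "F2 ^ (k - 1 - t) * F1 ^ (j - 1 - t) * ev (Q3 t (k - 1) (j - 1)) * ev (q3 k j) = F2 ^ (k - Suc t) * F1 ^ (j - Suc t) * ev (Q3 (Suc t) k j)"
    by (simp add: Q3_Suc ev_mult mult.assoc ev_comm)
  finally show ?case .
qed


definition adU :: "U \<Rightarrow> U \<Rightarrow> U" where "adU x y = x * y - y * x"

lemma adlem1:
  assumes base: "\<And>a. a < K \<Longrightarrow> mo (X * F ^ a * S) 0"
  shows "m + a < K \<Longrightarrow> mo ((adU F ^^ m) X * F ^ a * S) 0"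
proof (induction m arbitrary: a)
  case 0 then show ?case using base by simp
next
  case (Suc m)
  let ?Y = "(adU F ^^ m) X"
  have "(adU F ^^ Suc m) X * F ^ a * S = F * (?Y * F ^ a * S) - ?Y * F ^ Suc a * S"
    by (simp add: adU_def algebra_simps)
  also have "mo \<dots> (F * 0 - 0)"
    by (rule mo_diff[OF mo_lmult[OF Suc.IH] Suc.IH]) (use Suc.prems in auto)
  finally show ?case by simp
qed

lemma adlem2:
  assumes base: "\<And>a. a < K \<Longrightarrow> mo (X * F ^ a * S) 0"
  shows "m + a = K \<Longrightarrow> mo ((adU F ^^ m) X * F ^ a * S) ((-1) ^ m * (X * F ^ K * S))"
proof (induction m arbitrary: a)
  case 0 then show ?case by (simp add: mo_refl)
next
  case (Suc m)
  let ?Y = "(adU F ^^ m) X"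
  have "(adU F ^^ Suc m) X * F ^ a * S = F * (?Y * F ^ a * S) - ?Y * F ^ Suc a * S"
    by (simp add: adU_def algebra_simps)
  also have "mo \<dots> (F * 0 - (-1) ^ m * (X * F ^ K * S))"
    by (rule mo_diff[OF mo_lmult[OF adlem1[OF base]] Suc.IH]) (use Suc.prems in auto)
  finally show ?case by simp
qed

lemma Q1_zero: "a < n \<Longrightarrow> Q1 n a = 0"
  unfolding Q1_def by (rule prod_zero) (auto intro!: bexI[of _ a] simp: f1_def)

context fixes n :: nat
begin

definition A :: "nat \<Rightarrow> U" where "A t = (adU F1 ^^ t) (E1 ^ n)"

lemma base_A: "a < n \<Longrightarrow> mo (E1 ^ n * F1 ^ a * 1) 0"
  using E1pow[of n a] by (simp add: Q1_zero ev_simps)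

lemma A_vanish: "t + a < n \<Longrightarrow> mo (A t * F1 ^ a) 0"
proof -
  assume ta: "t + a < n"
  have "mo ((adU F1 ^^ t) (E1 ^ n) * F1 ^ a * 1) 0" by (rule adlem1[OF base_A]) (use ta in simp_all)
  then show ?thesis by (simp add: A_def)
qed

lemma A_full: "t \<le> n \<Longrightarrow> mo (A t * F1 ^ (n - t)) ((-1) ^ t * ev (Q1 n n))"
proof -
  assume tn: "t \<le> n"
  have "mo (A t * F1 ^ (n - t) * 1) ((-1) ^ t * (E1 ^ n * F1 ^ n * 1))"
    unfolding A_def by (rule adlem2[OF base_A]) (use tn in simp_all)
  also have "mo ((-1) ^ t * (E1 ^ n * F1 ^ n * 1)) ((-1) ^ t * (F1 ^ (n - n) * ev (Q1 n n)))"
    using mo_lmult[OF E1pow[of n n]] by simp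
  finally show ?thesis by simp
qed

definition Vp :: U where
  "Vp = (\<Sum>t = 0..2*n. C (1 / of_nat (fact t)) * A t * E2 ^ (2*n - t) * E3 ^ t)"

definition P :: "nat \<Rightarrow> nat \<Rightarrow> nat \<Rightarrow> hp" where
  "P t k j = Q2 (2*n - t) (k - t) (j - t) * Q3 t k j"

lemma term_red: "mo (C c * A t * E2 ^ (2*n - t) * E3 ^ t * F2 ^ k * F1 ^ j)
   (C c * A t * (F2 ^ ((k - t) - (2*n - t)) * F1 ^ (j - t)) * ev (P t k j))"
proof -
  have "C c * A t * E2 ^ (2*n - t) * E3 ^ t * F2 ^ k * F1 ^ j = (C c * A t * E2 ^ (2*n - t)) * (E3 ^ t * F2 ^ k * F1 ^ j)"
    by (simp add: mult.assoc)
  also have "mo \<dots> ((C c * A t * E2 ^ (2*n - t)) * (F2 ^ (k - t) * F1 ^ (j - t) * ev (Q3 t k j)))"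
    by (rule mo_lmult[OF E3pow])
  also have "(C c * A t * E2 ^ (2*n - t)) * (F2 ^ (k - t) * F1 ^ (j - t) * ev (Q3 t k j))
      = (C c * A t) * ((E2 ^ (2*n - t) * F2 ^ (k - t) * F1 ^ (j - t)) * ev (Q3 t k j))"
    by (simp add: mult.assoc)
  also have "mo \<dots> ((C c * A t) * ((F2 ^ ((k - t) - (2*n - t)) * F1 ^ (j - t) * ev (Q2 (2*n - t) (k - t) (j - t))) * ev (Q3 t k j)))"
    by (rule mo_lmult[OF mo_ev[OF E2pow]])
  also have "(C c * A t) * ((F2 ^ ((k - t) - (2*n - t)) * F1 ^ (j - t) * ev (Q2 (2*n - t) (k - t) (j - t))) * ev (Q3 t k j))
     = C c * A t * (F2 ^ ((k - t) - (2*n - t)) * F1 ^ (j - t)) * ev (P t k j)"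
    by (simp add: P_def ev_mult mult.assoc)
  finally show ?thesis .
qed

lemma g2_zero: "g2 l 0 = 0" by (simp add: g2_def)
lemma q3_zero: "q3 0 j = 0" "q3 k 0 = 0" by (simp_all add: q3_def f1_def)

lemma P_zero1: "k < 2*n \<Longrightarrow> t \<le> 2*n \<Longrightarrow> P t k j = 0"
proof -
  assume k: "k < 2*n" and t: "t \<le> 2*n"
  show ?thesis
  proof (cases "t \<le> k")
    case True
    have "Q2 (2*n - t) (k - t) (j - t) = 0"
      unfolding Q2_def by (rule prod_zero) (use True k in \<open>auto intro!: bexI[of _ "k - t"] simp: g2_zero\<close>)
    then show ?thesis by (simp add: P_def)
  next
    case False
    have "Q3 t k j = 0"
      unfolding Q3_def by (rule prod_zero) (use False in \<open>auto intro!: bexI[of _ k] simp: q3_zero\<close>)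
    then show ?thesis by (simp add: P_def)
  qed
qed

lemma P_zero2: "j < t \<Longrightarrow> P t k j = 0"
proof -
  assume "j < t"
  have "Q3 t k j = 0"
    unfolding Q3_def by (rule prod_zero) (use \<open>j < t\<close> in \<open>auto intro!: bexI[of _ j] simp: q3_zero\<close>)
  then show ?thesis by (simp add: P_def)
qed

lemma Vp_expand: "Vp * F2 ^ k * F1 ^ j = (\<Sum>t = 0..2*n. C (1 / of_nat (fact t)) * A t * E2 ^ (2*n - t) * E3 ^ t * F2 ^ k * F1 ^ j)"
  unfolding Vp_def by (simp add: sum_distrib_right)

lemma VP_zero: "k \<le> 2*n \<Longrightarrow> k < 2*n \<or> j < n \<Longrightarrow> mo (Vp * F2 ^ k * F1 ^ j) 0"
proof -
  assume k: "k \<le> 2*n" and kj: "k < 2*n \<or> j < n"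
  have "mo (Vp * F2 ^ k * F1 ^ j) (\<Sum>t = 0..2*n. 0)"
    unfolding Vp_expand
  proof (rule mo_sum)
    fix t assume t: "t \<in> {0..2*n}"
    let ?c = "C (1 / of_nat (fact t))"
    have r: "mo (?c * A t * E2 ^ (2*n - t) * E3 ^ t * F2 ^ k * F1 ^ j)
       (?c * A t * (F2 ^ ((k - t) - (2*n - t)) * F1 ^ (j - t)) * ev (P t k j))" by (rule term_red)
    show "mo (?c * A t * E2 ^ (2*n - t) * E3 ^ t * F2 ^ k * F1 ^ j) 0"
    proof (cases "k < 2*n")
      case True
      then show ?thesis using r P_zero1[of k t j] t by (simp add: ev_simps)
    next
      case False
      then have k2: "k = 2*n" and j: "j < n" using k kj by auto
      show ?thesis
      proof (cases "t \<le> j")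
        case True
        have k0: "(k - t) - (2*n - t) = 0" using k2 by simp
        have "mo (A t * F1 ^ (j - t)) 0" by (rule A_vanish) (use True j in simp)
        then have "mo (?c * (A t * F1 ^ (j - t)) * ev (P t k j)) (?c * 0 * ev (P t k j))"
          by (rule mo_ev[OF mo_lmult])
        then have "mo (?c * A t * (F2 ^ ((k - t) - (2*n - t)) * F1 ^ (j - t)) * ev (P t k j)) (?c * 0 * ev (P t k j))"
          by (simp only: k0 power_0 mult_1_left mult.assoc)
        then show ?thesis using r mo_trans by simp
      next
        case False
        then show ?thesis using r P_zero2[of j t k] by (simp add: ev_simps)
      qed
    qed
  qed
  then show ?thesis by simp
qed

definition Phi :: hp where
  "Phi = (\<Sum>t = 0..2*n. hc (1 / of_nat (fact t)) * (-1) ^ t * Q1 n n * P t (2*n) n)"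

lemma VP_full: "mo (Vp * F2 ^ (2*n) * F1 ^ n) (ev Phi)"
proof -
  have "mo (Vp * F2 ^ (2*n) * F1 ^ n) (\<Sum>t = 0..2*n. ev (hc (1 / of_nat (fact t)) * (-1) ^ t * Q1 n n * P t (2*n) n))"
    unfolding Vp_expand
  proof (rule mo_sum)
    fix t assume t: "t \<in> {0..2*n}"
    let ?c = "C (1 / of_nat (fact t))"
    have r: "mo (?c * A t * E2 ^ (2*n - t) * E3 ^ t * F2 ^ (2*n) * F1 ^ n)
       (?c * A t * (F2 ^ ((2*n - t) - (2*n - t)) * F1 ^ (n - t)) * ev (P t (2*n) n))" by (rule term_red)
    show "mo (?c * A t * E2 ^ (2*n - t) * E3 ^ t * F2 ^ (2*n) * F1 ^ n) (ev (hc (1 / of_nat (fact t)) * (-1) ^ t * Q1 n n * P t (2*n) n))"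
    proof (cases "t \<le> n")
      case True
      have "mo (?c * (A t * F1 ^ (n - t)) * ev (P t (2*n) n)) (?c * ((-1) ^ t * ev (Q1 n n)) * ev (P t (2*n) n))"
        by (rule mo_ev[OF mo_lmult[OF A_full[OF True]]])
      then have "mo (?c * A t * (F2 ^ ((2*n - t) - (2*n - t)) * F1 ^ (n - t)) * ev (P t (2*n) n))
           (?c * ((-1) ^ t * ev (Q1 n n)) * ev (P t (2*n) n))"
        by (simp only: diff_self_eq_0 power_0 mult_1_left mult.assoc)
      also have "?c * ((-1) ^ t * ev (Q1 n n)) * ev (P t (2*n) n) = ev (hc (1 / of_nat (fact t)) * (-1) ^ t * Q1 n n * P t (2*n) n)"
        by (simp add: ev_simps ev_hc mult.assoc)
      finally show ?thesis using r mo_trans by blast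
    next
      case False
      then show ?thesis using r P_zero2[of n t "2*n"] by (simp add: ev_simps)
    qed
  qed
  then show ?thesis by (simp add: Phi_def ev_sum)
qed

definition W :: U where "W = (adU F2 ^^ (2*n)) Vp"

lemma W_red: "mo (W * F1 ^ j) (Vp * F2 ^ (2*n) * F1 ^ j)"
proof -
  have "mo ((adU F2 ^^ (2*n)) Vp * F2 ^ 0 * F1 ^ j) ((-1) ^ (2*n) * (Vp * F2 ^ (2*n) * F1 ^ j))"
    by (rule adlem2[OF VP_zero]) auto
  then show ?thesis by (simp add: W_def)
qed

definition R :: U where "R = (adU F1 ^^ n) W"

lemma R_red: "mo R ((-1) ^ n * ev Phi)"
proof -
  have base: "mo (W * F1 ^ a * 1) 0" if "a < n" for a
    using mo_trans[OF W_red VP_zero[of "2*n" a]] that by simp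
  have "mo ((adU F1 ^^ n) W * F1 ^ 0 * 1) ((-1) ^ n * (W * F1 ^ n * 1))"
    by (rule adlem2[OF base]) auto
  also have "mo ((-1) ^ n * (W * F1 ^ n * 1)) ((-1) ^ n * ev Phi)"
    using mo_lmult[OF mo_trans[OF W_red VP_full]] by simp
  finally show ?thesis by (simp add: R_def)
qed

end


lemma G1: "(\<Prod>i<s. of_nat (s - i) * (a - of_nat (s - i) + 1)) = (of_nat (fact s) :: 'a::comm_ring_1) * (\<Prod>i<s. a - of_nat i)"
proof (induction s)
  case 0 then show ?case by simp
next
  case (Suc s)
  have "(\<Prod>i<Suc s. of_nat (Suc s - i) * (a - of_nat (Suc s - i) + 1))
      = (of_nat (Suc s) * (a - of_nat (Suc s) + 1)) * (\<Prod>i<s. of_nat (s - i) * (a - of_nat (s - i) + 1))"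
    by (subst prod.lessThan_Suc_shift) simp
  also have "\<dots> = (of_nat (Suc s) * (a - of_nat s)) * (of_nat (fact s) * (\<Prod>i<s. a - of_nat i))"
    using Suc by (simp add: algebra_simps)
  also have "\<dots> = of_nat (fact (Suc s)) * (\<Prod>i<Suc s. a - of_nat i)"
    by (simp add: prod.lessThan_Suc algebra_simps)
  finally show ?case .
qed

lemma poch_rev: "(\<Prod>i<l. b + of_nat l - of_nat i) = pochhammer (b + 1 :: 'a::comm_ring_1) l"
proof (induction l)
  case 0 then show ?case by simp
next
  case (Suc l)
  have "(\<Prod>i<Suc l. b + of_nat (Suc l) - of_nat i) = (b + of_nat (Suc l)) * (\<Prod>i<l. b + of_nat (Suc l) - of_nat (Suc i))"
    by (subst prod.lessThan_Suc_shift) simp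
  also have "(\<Prod>i<l. b + of_nat (Suc l) - of_nat (Suc i)) = (\<Prod>i<l. b + of_nat l - of_nat i)"
    by (rule prod.cong) (simp_all add: algebra_simps)
  finally show ?case using Suc by (simp add: pochhammer_Suc algebra_simps)
qed

lemma split_prod: "(\<Prod>i<l+n. b + of_nat l - of_nat i) = pochhammer (b + 1 :: 'a::comm_ring_1) l * (\<Prod>i<n. b - of_nat i)"
proof (induction n)
  case 0 then show ?case by (simp add: poch_rev)
next
  case (Suc n)
  then show ?case by (simp add: prod.lessThan_Suc algebra_simps)
qed

lemma prod_neg: "finite S \<Longrightarrow> (\<Prod>i\<in>S. - f i) = (-1) ^ card S * (prod f S :: 'a::comm_ring_1)"
  by (induction S rule: finite_induct) (simp_all add: algebra_simps)

lemma ff: "t \<le> m \<Longrightarrow> (\<Prod>i<t. m - i) * fact (m - t) = (fact m :: nat)"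
proof (induction t)
  case 0 then show ?case by simp
next
  case (Suc t)
  have tm: "t \<le> m" "0 < m - t" using Suc.prems by auto
  have e1: "m - t - 1 = m - Suc t" by arith
  have "fact (m - t) = (m - t) * fact (m - t - 1)"
    using fact_reduce[OF tm(2), where 'a=nat] by simp
  then have f: "fact (m - t) = (m - t) * fact (m - Suc t)" by (simp only: e1)
  have "(\<Prod>i<Suc t. m - i) * fact (m - Suc t) = (\<Prod>i<t. m - i) * ((m - t) * fact (m - Suc t))"
    by (simp only: prod.lessThan_Suc mult.assoc)
  also have "\<dots> = fact m" using Suc.IH[OF tm(1)] f by simp
  finally show ?case .
qed
lemma numbers: "t \<le> n \<Longrightarrow> fact n * fact (2*n - t) * (\<Prod>i<t. (2*n - i) * (n - i)) = fact t * (fact n * fact (2*n) * (n choose t))"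
proof -
  assume tn: "t \<le> n"
  have a: "(\<Prod>i<t. 2*n - i) * fact (2*n - t) = fact (2*n)" by (rule ff) (use tn in linarith)
  have b: "(\<Prod>i<t. n - i) * fact (n - t) = fact n" by (rule ff[OF tn])
  have c: "fact t * fact (n - t) * (n choose t) = fact n" by (rule binomial_fact_lemma[OF tn])
  have e: "(\<Prod>i<t. n - i) * fact (n - t) = (fact t * (n choose t)) * fact (n - t)"
    using b c by (simp only: mult.commute mult.left_commute)
  have fnz: "fact (n - t) \<noteq> (0::nat)" by (rule fact_nonzero)
  have d: "(\<Prod>i<t. n - i) = fact t * (n choose t)"
    using e fnz by (rule mult_right_cancel[THEN iffD1, rotated])
  have pd: "(\<Prod>i<t. (2*n - i) * (n - i)) = (\<Prod>i<t. 2*n - i) * (\<Prod>i<t. n - i)"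
    by (rule prod.distrib)
  show ?thesis
    unfolding pd d using a by (simp only: mult_ac)
qed

context fixes n :: nat
begin

definition Pp :: hp where
  "Pp = (\<Prod>i<n. hA - of_nat i) * (\<Prod>i<n. hB - of_nat i) * pochhammer (hA + hB - of_nat n + 2) n"

lemma Q1nn: "Q1 n n = of_nat (fact n) * (\<Prod>i<n. hA - of_nat i)"
  unfolding Q1_def f1_def by (rule G1)

lemma Q2ss: "t \<le> n \<Longrightarrow> Q2 (2*n - t) (2*n - t) (n - t)
   = of_nat (fact (2*n - t)) * (pochhammer (hB + 1) (n - t) * (\<Prod>i<n. hB - of_nat i))"
proof -
  assume tn: "t \<le> n"
  have "Q2 (2*n - t) (2*n - t) (n - t) = of_nat (fact (2*n - t)) * (\<Prod>i<2*n - t. (hB + of_nat (n - t)) - of_nat i)"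
    unfolding Q2_def g2_def using G1[of "2*n - t" "hB + of_nat (n - t)"] by (simp add: algebra_simps)
  also have "(\<Prod>i<2*n - t. (hB + of_nat (n - t)) - of_nat i) = (\<Prod>i<(n - t) + n. hB + of_nat (n - t) - of_nat i)"
  proof -
    have eq: "2*n - t = (n - t) + n" using tn by simp
    show ?thesis by (simp only: eq)
  qed
  also have "\<dots> = pochhammer (hB + 1) (n - t) * (\<Prod>i<n. hB - of_nat i)"
    by (rule split_prod)
  finally show ?thesis .
qed

lemma Q3tn: "t \<le> n \<Longrightarrow> Q3 t (2*n) n = (-1) ^ t * of_nat (\<Prod>i<t. (2*n - i) * (n - i)) * pochhammer (hA - of_nat n + 1) t"
proof -
  assume tn: "t \<le> n"
  have "Q3 t (2*n) n = (\<Prod>i<t. (-1) * (of_nat ((2*n - i) * (n - i)) * (hA - of_nat n + 1 + of_nat i)))"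
    unfolding Q3_def q3_def f1_def
  proof (rule prod.cong)
    fix i assume "i \<in> {..<t}"
    then have i: "i < n" using tn by simp
    then have "(of_nat (n - i) :: hp) = of_nat n - of_nat i" by (simp add: of_nat_diff)
    then show "- (of_nat (2 * n - i) * (of_nat (n - i) * (hA - of_nat (n - i) + 1))) =
        (-1) * (of_nat ((2*n - i) * (n - i)) * (hA - of_nat n + 1 + of_nat i))"
      by (simp only: of_nat_mult) (simp add: algebra_simps)
  qed simp
  also have "\<dots> = (-1) ^ t * of_nat (\<Prod>i<t. (2*n - i) * (n - i)) * pochhammer (hA - of_nat n + 1) t"
    by (simp add: prod.distrib pochhammer_prod lessThan_atLeast0 mult.assoc prod_neg)
  finally show ?thesis .
qed

lemma term_eq: "t \<le> n \<Longrightarrow> hc (1 / of_nat (fact t)) * (-1) ^ t * Q1 n n * P n t (2*n) n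
   = of_nat (fact n * fact (2*n)) * (\<Prod>i<n. hA - of_nat i) * (\<Prod>i<n. hB - of_nat i)
     * (of_nat (n choose t) * pochhammer (hA - of_nat n + 1) t * pochhammer (hB + 1) (n - t))"
proof -
  assume tn: "t \<le> n"
  have hcf: "hc (1 / of_nat (fact t)) * of_nat (fact t) = 1"
    by (simp add: hc_of_nat[symmetric] hc_mult[symmetric] hc_1)
  have num: "(of_nat (fact n) :: hp) * of_nat (fact (2*n - t)) * of_nat (\<Prod>i<t. (2*n - i) * (n - i))
      = of_nat (fact t) * of_nat (fact n * fact (2*n) * (n choose t))"
    using arg_cong[OF numbers[OF tn], of "of_nat :: nat \<Rightarrow> hp"] by (simp only: of_nat_mult)
  have sq: "((-1) ^ t * (-1) ^ t :: hp) = 1" by (simp add: power_mult_distrib[symmetric])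
  have "hc (1 / of_nat (fact t)) * (-1) ^ t * Q1 n n * P n t (2*n) n
     = (hc (1 / of_nat (fact t)) * ((-1) ^ t * (-1) ^ t) * (of_nat (fact n) * of_nat (fact (2*n - t)) * of_nat (\<Prod>i<t. (2*n - i) * (n - i)))) *
       ((\<Prod>i<n. hA - of_nat i) * (\<Prod>i<n. hB - of_nat i) * pochhammer (hA - of_nat n + 1) t * pochhammer (hB + 1) (n - t))"
    unfolding P_def Q1nn Q2ss[OF tn] Q3tn[OF tn] by (simp only: mult_ac) 
  also have "\<dots> = (hc (1 / of_nat (fact t)) * of_nat (fact t)) * of_nat (fact n * fact (2*n) * (n choose t)) *
       ((\<Prod>i<n. hA - of_nat i) * (\<Prod>i<n. hB - of_nat i) * pochhammer (hA - of_nat n + 1) t * pochhammer (hB + 1) (n - t))"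
    unfolding sq num by (simp only: mult_1_right mult.assoc)
  also have "\<dots> = of_nat (fact n * fact (2*n)) * (\<Prod>i<n. hA - of_nat i) * (\<Prod>i<n. hB - of_nat i)
     * (of_nat (n choose t) * pochhammer (hA - of_nat n + 1) t * pochhammer (hB + 1) (n - t))"
    unfolding hcf mult_1_left by (simp only: of_nat_mult mult_ac)
  finally show ?thesis .
qed

lemma Phi_tail: "n < i \<Longrightarrow> hc (1 / of_nat (fact i)) * (-1) ^ i * Q1 n n * P n i (2*n) n = 0"
proof -
  assume "n < i"
  then have Pz: "P n i (2*n) n = 0" by (rule P_zero2)
  show ?thesis unfolding Pz by (rule mult_zero_right)
qed

lemma Phi_eq: "Phi n = of_nat (fact n * fact (2*n)) * Pp"
proof -
  let ?K = "of_nat (fact n * fact (2*n)) * (\<Prod>i<n. hA - of_nat i) * (\<Prod>i<n. hB - of_nat i)"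
  let ?f = "\<lambda>t. of_nat (n choose t) * pochhammer (hA - of_nat n + 1) t * pochhammer (hB + 1) (n - t)"
  have "Phi n = (\<Sum>t = 0..n. hc (1 / of_nat (fact t)) * (-1) ^ t * Q1 n n * P n t (2*n) n)"
    unfolding Phi_def
  proof (rule sum.mono_neutral_right)
    show "finite {0..2*n}" by simp
    show "{0..n} \<subseteq> {0..2*n}" by auto
    show "\<forall>i\<in>{0..2*n} - {0..n}. hc (1 / of_nat (fact i)) * (-1) ^ i * Q1 n n * P n i (2*n) n = 0"
      by (rule ballI, rule Phi_tail) simp
  qed
  also have "\<dots> = (\<Sum>t = 0..n. ?K * ?f t)"
    by (rule sum.cong[OF refl], rule term_eq) simp
  also have "\<dots> = ?K * (\<Sum>t\<le>n. ?f t)"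
    unfolding atLeast0AtMost by (rule sum_distrib_left[symmetric])
  finally have eq1: "Phi n = ?K * (\<Sum>t\<le>n. ?f t)" .
  have X: "hA + hB - of_nat n + 2 = hA - of_nat n + 1 + (hB + 1)" by simp
  have eq2: "(\<Sum>t\<le>n. ?f t) = pochhammer (hA + hB - of_nat n + 2) n"
    unfolding X by (rule pochhammer_binomial_sum[symmetric])
  show ?thesis unfolding eq1 eq2 by (simp only: Pp_def mult.assoc)
qed

end


definition wt :: "int \<Rightarrow> int \<Rightarrow> U \<Rightarrow> bool" where
  "wt p q x \<longleftrightarrow> adU H1 x = of_int p * x \<and> adU H2 x = of_int q * x"

lemma adU_mult: "adU h (x * y) = adU h x * y + x * adU h y"
  by (simp add: adU_def algebra_simps)

lemma of_int_left_comm: "(of_int k :: 'a::ring_1) * (x * y) = x * (of_int k * y)"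
proof -
  have "(of_int k :: 'a) * (x * y) = (of_int k * x) * y" by (simp only: mult.assoc)
  also have "\<dots> = (x * of_int k) * y" by (simp only: mult_of_int_commute)
  finally show ?thesis by (simp only: mult.assoc)
qed

lemma wt_mult: "wt p q x \<Longrightarrow> wt p' q' y \<Longrightarrow> wt (p + p') (q + q') (x * y)"
proof -
  assume a: "wt p q x" and b: "wt p' q' y"
  have "adU H1 (x * y) = of_int p * x * y + x * (of_int p' * y)" using a b unfolding wt_def adU_mult by simp
  also have "\<dots> = of_int (p + p') * (x * y)" by (simp only: of_int_left_comm[symmetric] of_int_add distrib_right mult.assoc)
  finally have 1: "adU H1 (x * y) = of_int (p + p') * (x * y)" .
  have "adU H2 (x * y) = of_int q * x * y + x * (of_int q' * y)" using a b unfolding wt_def adU_mult by simp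
  also have "\<dots> = of_int (q + q') * (x * y)" by (simp only: of_int_left_comm[symmetric] of_int_add distrib_right mult.assoc)
  finally have 2: "adU H2 (x * y) = of_int (q + q') * (x * y)" .
  show ?thesis using 1 2 by (simp add: wt_def)
qed

lemma wt_add: "wt p q x \<Longrightarrow> wt p q y \<Longrightarrow> wt p q (x + y)"
  unfolding wt_def by (simp add: adU_def algebra_simps)
lemma wt_diff: "wt p q x \<Longrightarrow> wt p q y \<Longrightarrow> wt p q (x - y)"
  unfolding wt_def by (simp add: adU_def algebra_simps)
lemma wt_0: "wt p q 0" unfolding wt_def by (simp add: adU_def)
lemma wt_1: "wt 0 0 1" unfolding wt_def by (simp add: adU_def)
lemma wt_cong: "wt p q x \<Longrightarrow> p = p' \<Longrightarrow> q = q' \<Longrightarrow> wt p' q' x" by simp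

lemma wt_sum: "(\<And>i. i \<in> S \<Longrightarrow> wt p q (f i)) \<Longrightarrow> wt p q (sum f S)"
  by (induction S rule: infinite_finite_induct) (auto intro: wt_add wt_0)

lemma wt_pow: "wt p q x \<Longrightarrow> wt (int m * p) (int m * q) (x ^ m)"
proof (induction m)
  case 0 then show ?case using wt_1 by simp
next
  case (Suc m)
  have "wt (p + int m * p) (q + int m * q) (x * x ^ m)" by (rule wt_mult[OF Suc.prems Suc.IH[OF Suc.prems]])
  then show ?case by (simp add: algebra_simps)
qed

lemma wt_ad: "wt p q F \<Longrightarrow> wt p' q' x \<Longrightarrow> wt (p + p') (q + q') (adU F x)"
proof -
  assume a: "wt p q F" and b: "wt p' q' x"
  have "wt (p + p') (q + q') (F * x)" by (rule wt_mult[OF a b])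
  moreover have "wt (p + p') (q + q') (x * F)" using wt_mult[OF b a] by (simp add: add.commute)
  ultimately show ?thesis unfolding adU_def by (rule wt_diff)
qed

lemma wt_adpow: "wt p q F \<Longrightarrow> wt p' q' x \<Longrightarrow> wt (p' + int m * p) (q' + int m * q) ((adU F ^^ m) x)"
proof (induction m)
  case 0 then show ?case by simp
next
  case (Suc m)
  have "wt (p + (p' + int m * p)) (q + (q' + int m * q)) (adU F ((adU F ^^ m) x))"
    by (rule wt_ad[OF Suc.prems(1) Suc.IH[OF Suc.prems]])
  then show ?case by (simp add: algebra_simps)
qed

lemma wt_C: "wt 0 0 (C c)" unfolding wt_def adU_def by (simp add: C_comm_H1 C_comm_H2)

lemma wt_E1: "wt 2 (-1) E1" unfolding wt_def adU_def using H1E1 H2E1 by simp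
lemma wt_E2: "wt (-1) 2 E2" unfolding wt_def adU_def using H1E2 H2E2 by simp
lemma wt_E3: "wt 1 1 E3" unfolding wt_def adU_def using H1E3 H2E3 by simp
lemma wt_F1: "wt (-2) 1 F1" unfolding wt_def adU_def using H1F1 H2F1 by simp
lemma wt_F2: "wt 1 (-2) F2" unfolding wt_def adU_def using H1F2 H2F2 by simp

lemma wt_A: "wt (int n * 2 + int t * (-2)) (int n * (-1) + int t * 1) (A n t)"
  unfolding A_def by (rule wt_adpow[OF wt_F1 wt_pow[OF wt_E1]])

lemma wt_term: "t \<le> 2*n \<Longrightarrow> wt 0 (3 * int n) (C c * A n t * E2 ^ (2*n - t) * E3 ^ t)"
proof -
  assume t: "t \<le> 2*n"
  have "wt (0 + (int n * 2 + int t * (-2)) + int (2*n - t) * (-1) + int t * 1)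
           (0 + (int n * (-1) + int t * 1) + int (2*n - t) * 2 + int t * 1)
           (C c * A n t * E2 ^ (2*n - t) * E3 ^ t)"
    by (rule wt_mult[OF wt_mult[OF wt_mult[OF wt_C wt_A] wt_pow[OF wt_E2]] wt_pow[OF wt_E3]])
  then show ?thesis by (rule wt_cong) (use t in \<open>simp_all add: of_nat_diff\<close>)
qed

lemma wt_Vp: "wt 0 (3 * int n) (Vp n)"
  unfolding Vp_def by (rule wt_sum) (rule wt_term, simp)

lemma wt_W: "wt (2 * int n) (- int n) (W n)"
  unfolding W_def using wt_adpow[OF wt_F2 wt_Vp, of "2*n" n] by (simp add: algebra_simps)

lemma wt_R: "wt 0 0 (R n)"
  unfolding R_def using wt_adpow[OF wt_F1 wt_W, of n n] by (simp add: algebra_simps)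


lemma cls_ad: "cls (ad x y) = adU (cls x) (cls y)" by (simp add: ad_def adU_def cls_simps)
lemma cls_ad_iter: "cls ((ad x ^^ m) y) = (adU (cls x) ^^ m) (cls y)"
  by (induction m) (simp_all add: cls_ad)
lemma cls_sc: "cls (sc c) = C c" by (simp add: C_def)

lemma cls_vprime: "cls (vprime n) = Vp n"
  unfolding vprime_def Vp_def A_def
  by (simp add: cls_sum cls_mult cls_pow cls_ad_iter cls_sc E1_def E2_def E3_def F1_def)

lemma cls_Rf: "cls ((ad f12 ^^ n) ((ad f23 ^^ (2*n)) (vprime n))) = R n"
  by (simp add: cls_ad_iter cls_vprime R_def W_def F1_def F2_def)

lemma Rmod_adpow: "X \<in> sl3 \<Longrightarrow> a \<in> Rmod v \<Longrightarrow> (ad (iota X) ^^ m) a \<in> Rmod v"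
  by (induction m) (auto intro: Rmod.adj)

lemma prod_list_upt: "prod_list (map f [0..<n]) = (\<Prod>i<n. (f i :: 'a::comm_monoid_mult))"
  by (induction n) (simp_all add: prod.lessThan_Suc mult.commute)

lemma prod_list_upto: "prod_list (map (\<lambda>j. c - of_int j) [-1..int n - 2]) = pochhammer (c - of_nat n + 2 :: 'a::comm_ring_1) n"
proof (induction n)
  case 0 then show ?case by simp
next
  case (Suc n)
  have "[-1..int (Suc n) - 2] = [-1..int n - 2] @ [int n - 1]"
    using upto_rec2[of "-1" "int n - 1"] by simp
  then have "prod_list (map (\<lambda>j. c - of_int j) [-1..int (Suc n) - 2]) = pochhammer (c - of_nat n + 2) n * (c - of_int (int n - 1))"
    using Suc by simp
  also have "\<dots> = pochhammer (c - of_nat (Suc n) + 2) (Suc n)"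
    by (simp add: pochhammer_rec algebra_simps)
  finally show ?case .
qed

lemma cls_ppoly: "cls (ppoly n) = ev (Pp n)"
proof -
  have a: "cls (prod_list (map (\<lambda>j. hh1 - of_nat j) [0..<n])) = ev (\<Prod>i<n. hA - of_nat i)"
    by (simp add: cls_prod_list cls_diff cls_of_nat prod_list_upt[symmetric] ev_prod_list ev_simps ev_hA H1_def)
  have b: "cls (prod_list (map (\<lambda>j. hh2 - of_nat j) [0..<n])) = ev (\<Prod>i<n. hB - of_nat i)"
    by (simp add: cls_prod_list cls_diff cls_of_nat prod_list_upt[symmetric] ev_prod_list ev_simps ev_hB H2_def)
  have c: "cls (prod_list (map (\<lambda>j. hh1 + hh2 - of_int j) [-1..int n - 2])) = ev (pochhammer (hA + hB - of_nat n + 2) n)"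
    by (simp add: cls_prod_list cls_diff cls_add cls_of_int prod_list_upto[symmetric] ev_prod_list ev_simps ev_hA ev_hB H1_def H2_def)
  show ?thesis unfolding ppoly_def Pp_def cls_mult a b c ev_mult ..
qed

lemma hc_m1: "hc (-1) = -1"
  by (simp add: ev_inject[symmetric] ev_hc ev_uminus ev_1 C_uminus C_1)
lemma hc_m1_pow: "hc ((-1) ^ k) = (-1) ^ k"
  by (induction k) (simp_all only: power_0 hc_1 power_Suc hc_mult hc_m1)

theorem lemma6p3:
  fixes n :: nat
  shows "\<exists>r \<in> Rmod (vprime n). zero_weight r \<and> in_Un_plus (r - ppoly n)"
proof -
  define Rf where "Rf = (ad f12 ^^ n) ((ad f23 ^^ (2*n)) (vprime n))"
  define N where "N = (fact n * fact (2*n) :: nat)"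
  define k where "k = (-1) ^ n / (of_nat N :: complex)"
  define r where "r = sc k * Rf"
  have Npos: "(of_nat N :: complex) \<noteq> 0" by (simp add: N_def)
  have "Rf \<in> Rmod (vprime n)"
    unfolding Rf_def using Rmod_adpow[OF sl3_F1 Rmod_adpow[OF sl3_F2 Rmod.gen]] by (simp add: iota_F1 iota_F2)
  then have rR: "r \<in> Rmod (vprime n)" unfolding r_def by (rule Rmod.smult)
  have clsr: "cls r = C k * R n" unfolding r_def Rf_def by (simp add: cls_mult cls_sc cls_Rf)
  have wr: "wt 0 0 (cls r)" unfolding clsr using wt_mult[OF wt_C wt_R] by simp
  have zw: "zero_weight r"
  proof -
    have "cls (ad hh1 r) = cls 0" "cls (ad hh2 r) = cls 0"
      using wr by (simp_all add: cls_ad wt_def cls_0 H1_def[symmetric] H2_def[symmetric])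
    then show ?thesis unfolding zero_weight_def cls_eq_iff by blast
  qed
  have "mo (cls r) (C k * ((-1) ^ n * ev (Phi n)))" unfolding clsr by (rule mo_lmult[OF R_red])
  also have "C k * ((-1) ^ n * ev (Phi n)) = ev (hc k * (-1) ^ n * Phi n)"
    by (simp add: ev_simps ev_hc mult.assoc)
  also have "hc k * (-1) ^ n * Phi n = Pp n"
  proof -
    have hk: "hc k * of_nat N = (-1) ^ n"
      using Npos by (simp add: hc_of_nat[symmetric] hc_mult[symmetric] k_def hc_m1_pow)
    have "hc k * (-1) ^ n * (of_nat N * Pp n) = (hc k * of_nat N) * ((-1) ^ n * Pp n)"
      by (simp only: mult_ac)
    also have "\<dots> = ((-1) ^ n * (-1) ^ n) * Pp n" by (simp only: hk mult.assoc)
    also have "\<dots> = Pp n" by (simp add: power_mult_distrib[symmetric])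
    finally show ?thesis by (simp only: Phi_eq N_def)
  qed
  finally have m: "mo (cls r) (cls (ppoly n))" by (simp only: cls_ppoly)
  then obtain a b c where abc: "cls r - cls (ppoly n) = a * E1 + b * E2 + c * E3"
    unfolding mo_def Nset_def by blast
  obtain a' where a': "a = cls a'" using cls_surj by blast
  obtain b' where b': "b = cls b'" using cls_surj by blast
  obtain c' where c': "c = cls c'" using cls_surj by blast
  have "cls (r - ppoly n) = cls (a' * e12 + b' * e23 + c' * e13)"
    using abc by (simp add: cls_simps a' b' c' E1_def E2_def E3_def)
  then have "in_Un_plus (r - ppoly n)" unfolding in_Un_plus_def cls_eq_iff by blast
  with rR zw show ?thesis by blast
qed

end
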